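(* For all $\theta\in\mathbb R$ and $\ell>0$ the function $a\mapsto R(\theta,a,\ell)$ is strictly decreasing on $(0,\infty)$. Moreover, for any $C_0\ge1$ there is a constant $C=C(C_0)\ge1$ such that for all $(\theta,a,\ell)\in\mathbb R\times(0,\infty)^2$ $$\max_{\alpha\in[a/C_0,C_0a]}|\partial_aR(\theta,\alpha,\ell)|\le C\min_{\alpha\in[a/C_0,C_0a]}|\partial_aR(\theta,\alpha,\ell)|.$$
   Context: Fix $m>0$. For $a,\ell>0$: $\kappa(a,\ell)=(1+4a^2\ell/m^2)^{-1/2}$, $p(a,\ell)=\frac{m}{2a^2\kappa(a,\ell)}$. For $\kappa\in(0,1)$, $G_\kappa(x)=\sqrt{x^2-1}-\kappa\ln(x+\sqrt{x^2-1})$ on $[1,\infty)$ and $H_\kappa=G_\kappa^{-1}:[0,\infty)\to[1,\infty)$. $R(\theta,a,\ell)=p(a,\ell)H_{\kappa(a,\ell)}(|\theta|/p(a,\ell))-p(a,\ell)\kappa(a,\ell)$, a smooth function on $\mathbb R\times(0,\infty)^2$. *)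

theory Defs
  imports "HOL-Analysis.Analysis"
begin

text \<open>The fixed parameter m > 0 is an explicit argument of kappa, p and R.\<close>

definition kappa :: "real \<Rightarrow> real \<Rightarrow> real \<Rightarrow> real" where
  "kappa m a l = 1 / sqrt (1 + 4 * a^2 * l / m^2)"

definition pfun :: "real \<Rightarrow> real \<Rightarrow> real \<Rightarrow> real" where
  "pfun m a l = m / (2 * a^2 * kappa m a l)"

definition Gk :: "real \<Rightarrow> real \<Rightarrow> real" where
  "Gk k x = sqrt (x^2 - 1) - k * ln (x + sqrt (x^2 - 1))"

definition Hk :: "real \<Rightarrow> real \<Rightarrow> real" where
  "Hk k y = the_inv_into {1..} (Gk k) y"

definition Rfun :: "real \<Rightarrow> real \<Rightarrow> real \<Rightarrow> real \<Rightarrow> real" where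
  "Rfun m \<theta> a l = pfun m a l * Hk (kappa m a l) (\<bar>\<theta>\<bar> / pfun m a l) - pfun m a l * kappa m a l"

end

theory Submission
  imports Defs
begin

lemma nonneg_deriv:
  fixes g g' :: "real \<Rightarrow> real"
  assumes "\<And>x. (g has_real_derivative g' x) (at x)" "\<And>x. x \<ge> 0 \<Longrightarrow> g' x \<ge> 0" "g 0 \<ge> 0" "t \<ge> 0"
  shows "g t \<ge> 0"
proof -
  have "g 0 \<le> g t"
    by (rule DERIV_nonneg_imp_nondecreasing[OF assms(4)]) (use assms in auto)
  thus ?thesis using assms(3) by simp
qed

lemma sinh_ge_t: "t \<ge> 0 \<Longrightarrow> sinh t - t \<ge> (0::real)"
proof -
  assume t: "t \<ge> 0"
  have d: "((\<lambda>t. sinh t - t) has_real_derivative ((\<lambda>t. cosh t - 1) x)) (at x)" for x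
    by (auto intro!: derivative_eq_intros simp: algebra_simps power2_eq_square)
  show ?thesis
    by (rule nonneg_deriv[OF d]) (use t  cosh_real_ge_1 in auto)
qed

lemma tC_ge_S: "t \<ge> 0 \<Longrightarrow> t * cosh t - sinh t \<ge> (0::real)"
proof -
  assume t: "t \<ge> 0"
  have d: "((\<lambda>t. t * cosh t - sinh t) has_real_derivative ((\<lambda>t. t * sinh t) x)) (at x)" for x
    by (auto intro!: derivative_eq_intros simp: algebra_simps power2_eq_square)
  show ?thesis
    by (rule nonneg_deriv[OF d]) (use t  cosh_real_ge_1 in auto)
qed

lemma c_nonneg: "t \<ge> 0 \<Longrightarrow> t * sinh t - 2 * cosh t + 2 \<ge> (0::real)"
proof -
  assume t: "t \<ge> 0"
  have d: "((\<lambda>t. t * sinh t - 2 * cosh t + 2) has_real_derivative ((\<lambda>t. t * cosh t - sinh t) x)) (at x)" for x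
    by (auto intro!: derivative_eq_intros simp: algebra_simps power2_eq_square)
  show ?thesis
    by (rule nonneg_deriv[OF d]) (use t tC_ge_S cosh_real_ge_1 in auto)
qed

lemma H6a: "t \<ge> 0 \<Longrightarrow> 5 * sinh t + 7 * t * cosh t \<ge> (0::real)"
  by (simp add: cosh_real_ge_1 add_nonneg_nonneg)

lemma H6b: "t \<ge> 0 \<Longrightarrow> 7 * t * sinh t - 2 * cosh t + 2 \<ge> (0::real)"
proof -
  assume t: "t \<ge> 0"
  have d: "((\<lambda>t. 7 * t * sinh t - 2 * cosh t + 2) has_real_derivative ((\<lambda>t. 5 * sinh t + 7 * t * cosh t) x)) (at x)" for x
    by (auto intro!: derivative_eq_intros simp: algebra_simps power2_eq_square)
  show ?thesis
    by (rule nonneg_deriv[OF d]) (use t H6a cosh_real_ge_1 in auto)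
qed

lemma H6c: "t \<ge> 0 \<Longrightarrow> 7 * t * cosh t - 9 * sinh t + 2 * t \<ge> (0::real)"
proof -
  assume t: "t \<ge> 0"
  have d: "((\<lambda>t. 7 * t * cosh t - 9 * sinh t + 2 * t) has_real_derivative ((\<lambda>t. 7 * t * sinh t - 2 * cosh t + 2) x)) (at x)" for x
    by (auto intro!: derivative_eq_intros simp: algebra_simps power2_eq_square)
  show ?thesis
    by (rule nonneg_deriv[OF d]) (use t H6b cosh_real_ge_1 in auto)
qed

lemma H6: "t \<ge> 0 \<Longrightarrow> 7 * t * sinh t - 16 * cosh t + 16 + t^2 \<ge> (0::real)"
proof -
  assume t: "t \<ge> 0"
  have d: "((\<lambda>t. 7 * t * sinh t - 16 * cosh t + 16 + t^2) has_real_derivative ((\<lambda>t. 7 * t * cosh t - 9 * sinh t + 2 * t) x)) (at x)" for x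
    by (auto intro!: derivative_eq_intros simp: algebra_simps power2_eq_square)
  show ?thesis
    by (rule nonneg_deriv[OF d]) (use t H6c cosh_real_ge_1 in auto)
qed

lemma H7d: "t \<ge> 0 \<Longrightarrow> 112 * t * sinh t * cosh t - 8 * (cosh t ^ 2 + sinh t ^ 2) + 16 * cosh t \<ge> (0::real)"
proof -
  assume t: "t \<ge> 0"
  have c: "t * sinh t \<ge> 2 * (cosh t - 1)" using c_nonneg[OF t] by simp
  have C1: "cosh t \<ge> 1" by (rule cosh_real_ge_1)
  have "112 * t * sinh t * cosh t \<ge> 224 * (cosh t - 1) * cosh t"
    using mult_right_mono[OF c, of "cosh t"] C1 by simp
  moreover have "sinh t ^ 2 = cosh t ^ 2 - 1" by (simp add: cosh_square_eq)
  moreover have "224 * (cosh t - 1) * cosh t - 8 * (2 * cosh t ^ 2 - 1) + 16 * cosh t \<ge> 0"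
  proof -
    have "224 * (cosh t - 1) * cosh t - 8 * (2 * cosh t ^ 2 - 1) + 16 * cosh t
       = 208 * (cosh t - 1) * cosh t + 8" by (simp add: algebra_simps power2_eq_square)
    also have "\<dots> \<ge> 0" using C1 by (simp add: add_nonneg_nonneg)
    finally show ?thesis .
  qed
  ultimately show ?thesis by (simp add: algebra_simps)
qed

lemma H7c: "t \<ge> 0 \<Longrightarrow> 28 * t * (cosh t ^ 2 + sinh t ^ 2) - 36 * sinh t * cosh t + 16 * sinh t \<ge> (0::real)"
proof -
  assume t: "t \<ge> 0"
  have d: "((\<lambda>t. 28 * t * (cosh t ^ 2 + sinh t ^ 2) - 36 * sinh t * cosh t + 16 * sinh t) has_real_derivative ((\<lambda>t. 112 * t * sinh t * cosh t - 8 * (cosh t ^ 2 + sinh t ^ 2) + 16 * cosh t) x)) (at x)" for x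
    by (auto intro!: derivative_eq_intros simp: algebra_simps power2_eq_square)
  show ?thesis
    by (rule nonneg_deriv[OF d]) (use t H7d algebra_simps power2_eq_square cosh_real_ge_1 in auto)
qed

lemma H7b: "t \<ge> 0 \<Longrightarrow> 28 * t * sinh t * cosh t - 16 * (cosh t ^ 2 + sinh t ^ 2) + 16 * cosh t \<ge> (0::real)"
proof -
  assume t: "t \<ge> 0"
  have d: "((\<lambda>t. 28 * t * sinh t * cosh t - 16 * (cosh t ^ 2 + sinh t ^ 2) + 16 * cosh t) has_real_derivative ((\<lambda>t. 28 * t * (cosh t ^ 2 + sinh t ^ 2) - 36 * sinh t * cosh t + 16 * sinh t) x)) (at x)" for x
    by (auto intro!: derivative_eq_intros simp: algebra_simps power2_eq_square)
  show ?thesis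
    by (rule nonneg_deriv[OF d]) (use t H7c algebra_simps power2_eq_square cosh_real_ge_1 in auto)
qed

lemma H7a: "t \<ge> 0 \<Longrightarrow> 7 * t * (cosh t ^ 2 + sinh t ^ 2) - 23 * sinh t * cosh t + 16 * sinh t \<ge> (0::real)"
proof -
  assume t: "t \<ge> 0"
  have d: "((\<lambda>t. 7 * t * (cosh t ^ 2 + sinh t ^ 2) - 23 * sinh t * cosh t + 16 * sinh t) has_real_derivative ((\<lambda>t. 28 * t * sinh t * cosh t - 16 * (cosh t ^ 2 + sinh t ^ 2) + 16 * cosh t) x)) (at x)" for x
    by (auto intro!: derivative_eq_intros simp: algebra_simps power2_eq_square)
  show ?thesis
    by (rule nonneg_deriv[OF d]) (use t H7b algebra_simps power2_eq_square cosh_real_ge_1 in auto)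
qed

lemma H7': "t \<ge> 0 \<Longrightarrow> 7 * t * sinh t * cosh t - 16 * cosh t ^ 2 + 16 * cosh t + sinh t ^ 2 \<ge> (0::real)"
proof -
  assume t: "t \<ge> 0"
  have d: "((\<lambda>t. 7 * t * sinh t * cosh t - 16 * cosh t ^ 2 + 16 * cosh t + sinh t ^ 2) has_real_derivative ((\<lambda>t. 7 * t * (cosh t ^ 2 + sinh t ^ 2) - 23 * sinh t * cosh t + 16 * sinh t) x)) (at x)" for x
    by (auto intro!: derivative_eq_intros simp: algebra_simps power2_eq_square)
  show ?thesis
    by (rule nonneg_deriv[OF d]) (use t H7a in auto)
qed

lemma H7: "t \<ge> 0 \<Longrightarrow> 8 * (t * sinh t - 2 * cosh t + 2) * cosh t - (t * cosh t - sinh t) * sinh t \<ge> (0::real)"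
  using H7'[of t] by (simp add: algebra_simps power2_eq_square)

lemma H8: "t \<ge> 0 \<Longrightarrow> 8 * (t * sinh t - 2 * cosh t + 2) * (cosh t - 1) - (t * cosh t - sinh t) * (sinh t - t) \<ge> (0::real)"
proof -
  assume t: "t \<ge> 0"
  have a: "t * cosh t - sinh t \<le> t * (cosh t - 1)" using sinh_ge_t[OF t] by (simp add: algebra_simps)
  have b: "sinh t - t \<ge> 0" using sinh_ge_t[OF t] .
  have "(t * cosh t - sinh t) * (sinh t - t) \<le> t * (cosh t - 1) * (sinh t - t)"
    by (rule mult_right_mono[OF a b])
  also have "\<dots> = (cosh t - 1) * (t * (sinh t - t))" by simp
  also have "\<dots> \<le> (cosh t - 1) * (8 * (t * sinh t - 2 * cosh t + 2))"
    apply (rule mult_left_mono)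
    using H6[OF t] by (auto simp: algebra_simps power2_eq_square cosh_real_ge_1)
  finally show ?thesis by (simp add: algebra_simps)
qed

definition Pf :: "real \<Rightarrow> real \<Rightarrow> real" where
  "Pf k t = 1 + 3 * k^2 + 2 * k * t * sinh t - k * (3 + k^2) * cosh t"

lemma Pf_decomp: "Pf k t = (1 - k)^3 + 2 * k * (t * sinh t - 2 * cosh t + 2) + k * (1 - k^2) * (cosh t - 1)"
  unfolding Pf_def by (simp add: algebra_simps power2_eq_square power3_eq_cube)

lemma Pf_pos: assumes "0 < k" "k < 1" "t \<ge> 0" shows "Pf k t > 0"
proof -
  have "(1 - k)^3 > 0" using assms by simp
  moreover have "2 * k * (t * sinh t - 2 * cosh t + 2) \<ge> 0" using c_nonneg[OF assms(3)] assms by simp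
  moreover have "k * (1 - k^2) * (cosh t - 1) \<ge> 0"
    using assms cosh_real_ge_1[of t] by (simp add: power2_eq_square mult_le_one)
  ultimately show ?thesis unfolding Pf_decomp by linarith
qed

lemma Pf_deriv: fixes k t :: real shows "((\<lambda>t. Pf k t) has_real_derivative (2 * k * t * cosh t - k * (1 + k^2) * sinh t)) (at t)"
  unfolding Pf_def by (auto intro!: derivative_eq_intros simp: algebra_simps power2_eq_square)

lemma Pf_deriv_nonneg: fixes k t :: real assumes "0 < k" "k < 1" "t \<ge> 0"
  shows "2 * k * t * cosh t - k * (1 + k^2) * sinh t \<ge> 0"
proof -
  have "2 * k * t * cosh t - k * (1 + k^2) * sinh t = 2 * k * (t * cosh t - sinh t) + k * (1 - k^2) * sinh t"
    by (simp add: algebra_simps)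
  moreover have "2 * k * (t * cosh t - sinh t) \<ge> 0" using tC_ge_S[OF assms(3)] assms by simp
  moreover have "k * (1 - k^2) * sinh t \<ge> 0" using assms by (simp add: power2_eq_square mult_le_one)
  ultimately show ?thesis by linarith
qed

lemma Pf_mono: assumes "0 < k" "k < 1" "0 \<le> t1" "t1 \<le> t2" shows "Pf k t1 \<le> Pf k t2"
  by (rule DERIV_nonneg_imp_nondecreasing[OF assms(4)])
     (use assms Pf_deriv Pf_deriv_nonneg in fastforce)

lemma ratio_decr:
  fixes X Y X' Y' :: "real \<Rightarrow> real" and p :: nat
  assumes dX: "\<And>t. t > 0 \<Longrightarrow> (X has_real_derivative X' t) (at t)"
   and dY: "\<And>t. t > 0 \<Longrightarrow> (Y has_real_derivative Y' t) (at t)"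
   and Ypos: "\<And>t. t > 0 \<Longrightarrow> Y t > 0"
   and key: "\<And>t. t > 0 \<Longrightarrow> X' t * Y t \<le> p * X t * Y' t"
   and p: "p > 0" and t1: "0 < t1" and t12: "t1 \<le> t2"
  shows "X t2 * Y t1 ^ p \<le> X t1 * Y t2 ^ p"
proof -
  let ?g = "\<lambda>t. X t / Y t ^ p"
  have "?g t2 \<le> ?g t1"
  proof (rule DERIV_nonpos_imp_nonincreasing[OF t12])
    fix x assume "t1 \<le> x" "x \<le> t2"
    then have x: "x > 0" using t1 by simp
    have Yx: "Y x > 0" using Ypos[OF x] .
    have d: "DERIV ?g x :> (X' x * Y x ^ p - (of_nat p * (Y' x * Y x ^ (p - Suc 0))) * X x) / (Y x ^ p) ^ Suc (Suc 0)"
      by (rule DERIV_quotient[OF dX[OF x] DERIV_power[OF dY[OF x]]]) (use Yx in simp)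
    have "X' x * Y x ^ p - (of_nat p * (Y' x * Y x ^ (p - Suc 0))) * X x = Y x ^ (p - 1) * (X' x * Y x - p * X x * Y' x)"
    proof -
      have Yp: "Y x ^ p = Y x ^ (p - 1) * Y x" using power_minus_mult[OF p, of "Y x"] by simp
      have "X' x * Y x ^ p - (of_nat p * (Y' x * Y x ^ (p - Suc 0))) * X x
          = X' x * (Y x ^ (p - 1) * Y x) - (of_nat p * (Y' x * Y x ^ (p - 1))) * X x"
        using Yp by simp
      then show ?thesis by (simp add: algebra_simps)
    qed
    also have "\<dots> \<le> 0"
      by (rule mult_nonneg_nonpos) (use key[OF x] Yx in auto)
    finally have "(X' x * Y x ^ p - (of_nat p * (Y' x * Y x ^ (p - Suc 0))) * X x) / (Y x ^ p) ^ Suc (Suc 0) \<le> 0"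
      by (rule divide_nonpos_pos) (use Yx in auto)
    with d show "\<exists>y. DERIV ?g x :> y \<and> y \<le> 0" by blast
  qed
  moreover have y1: "Y t1 ^ p > 0" and y2: "Y t2 ^ p > 0" and y1': "Y t1 > 0" and y2': "Y t2 > 0" using Ypos t1 t12 by auto
  ultimately have "X t2 / Y t2 ^ p * (Y t1 ^ p * Y t2 ^ p) \<le> X t1 / Y t1 ^ p * (Y t1 ^ p * Y t2 ^ p)"
    by (intro mult_right_mono) auto
  also have "X t2 / Y t2 ^ p * (Y t1 ^ p * Y t2 ^ p) = X t2 * Y t1 ^ p" using y2 y2' by simp
  also have "X t1 / Y t1 ^ p * (Y t1 ^ p * Y t2 ^ p) = X t1 * Y t2 ^ p" using y1 y1' by simp
  finally show ?thesis .
qed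

definition Phi :: "real \<Rightarrow> real \<Rightarrow> real" where "Phi k t = sinh t - k * t"

lemma Phi_pos: assumes "k < 1" "t > 0" shows "Phi k t > 0"
proof -
  have "sinh t \<ge> t" using sinh_ge_t[of t] assms by simp
  moreover have "k * t < t" using assms by simp
  ultimately show ?thesis unfolding Phi_def by simp
qed

lemma Phi_deriv: "((\<lambda>t. Phi k t) has_real_derivative (cosh t - k)) (at t)"
  unfolding Phi_def by (auto intro!: derivative_eq_intros)

lemma Phi_strict_mono: assumes "k < 1" "0 \<le> t1" "t1 < t2" shows "Phi k t1 < Phi k t2"
proof (rule DERIV_pos_imp_increasing[OF assms(3)])
  fix x show "\<exists>y. DERIV (Phi k) x :> y \<and> y > 0"
    using Phi_deriv[of k x] cosh_real_ge_1[of x] assms(1) by (intro exI[of _ "cosh x - k"]) auto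
qed

lemma ratioA: assumes "0 < k" "k < 1" "0 < t1" "t1 \<le> t2"
  shows "(cosh t2 - k) * Phi k t1 \<le> (cosh t1 - k) * Phi k t2"
proof -
  have "(cosh t2 - k) * Phi k t1 ^ 1 \<le> (cosh t1 - k) * Phi k t2 ^ 1"
  proof (rule ratio_decr[where X'=sinh and Y'="\<lambda>t. cosh t - k"])
    show "((\<lambda>t. cosh t - k) has_real_derivative sinh t) (at t)" for t
      by (auto intro!: derivative_eq_intros)
    show "((\<lambda>t. Phi k t) has_real_derivative cosh t - k) (at t)" for t by (rule Phi_deriv)
    show "t > 0 \<Longrightarrow> Phi k t > 0" for t using Phi_pos assms by simp
    show "sinh t * Phi k t \<le> real 1 * (cosh t - k) * (cosh t - k)" if tp: "t > 0" for t
    proof -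
      have S2: "sinh t ^ 2 = cosh t ^ 2 - 1" by (simp add: cosh_square_eq)
      have "real 1 * (cosh t - k) * (cosh t - k) - sinh t * Phi k t = (1 - k)^2 + k * (t * sinh t - 2 * cosh t + 2)"
        unfolding Phi_def using S2 by (simp add: algebra_simps power2_eq_square)
      moreover have "k * (t * sinh t - 2 * cosh t + 2) \<ge> 0" using c_nonneg[of t] assms tp by simp
      moreover have "(1 - k)^2 \<ge> 0" by simp
      ultimately show ?thesis by linarith
    qed
  qed (use assms in auto)
  thus ?thesis by simp
qed

lemma keyB_alg:
  fixes S C k t :: real
  assumes "S^2 = C^2 - 1"
  shows "8 * (1 + 3*k^2 + 2*k*t*S - k*(3+k^2)*C) * (C - k) - (2*k*t*C - k*(1+k^2)*S) * (S - k*t)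
   = 8*(1-k)^3*(C-k) + 2*k*((1-k)*(8*(t*S-2*C+2)*C - (t*C-S)*S) + k*(8*(t*S-2*C+2)*(C-1) - (t*C-S)*(S-t)))
     + k*(1-k^2)*(6*(C-1)*(C-k) + (C-1)^2 + k*(t*S-2*C+2))"
  using assms by algebra

lemma keyB: fixes k t :: real assumes "0 < k" "k < 1" "t \<ge> 0"
  shows "(2 * k * t * cosh t - k * (1 + k^2) * sinh t) * Phi k t \<le> 8 * Pf k t * (cosh t - k)"
proof -
  let ?S = "sinh t" and ?C = "cosh t"
  have S2: "?S^2 = ?C^2 - 1" by (simp add: cosh_square_eq)
  have C1: "?C \<ge> 1" by (rule cosh_real_ge_1)
  have h7: "8*(t*?S-2*?C+2)*?C - (t*?C-?S)*?S \<ge> 0" using H7[OF assms(3)] by simp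
  have h8: "8*(t*?S-2*?C+2)*(?C-1) - (t*?C-?S)*(?S-t) \<ge> 0" using H8[OF assms(3)] by simp
  have c: "t*?S-2*?C+2 \<ge> 0" using c_nonneg[OF assms(3)] .
  have k2: "1 - k^2 \<ge> 0" using assms by (simp add: power2_eq_square mult_le_one)
  have t1: "8*(1-k)^3*(?C-k) \<ge> 0" using assms C1 by simp
  have t2: "2*k*((1-k)*(8*(t*?S-2*?C+2)*?C - (t*?C-?S)*?S) + k*(8*(t*?S-2*?C+2)*(?C-1) - (t*?C-?S)*(?S-t))) \<ge> 0"
    using assms h7 h8 by (intro mult_nonneg_nonneg add_nonneg_nonneg) auto
  have t3: "k*(1-k^2)*(6*(?C-1)*(?C-k) + (?C-1)^2 + k*(t*?S-2*?C+2)) \<ge> 0"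
  proof -
    have "6*(?C-1)*(?C-k) \<ge> 0" using C1 assms by simp
    moreover have "(?C-1)^2 \<ge> 0" by simp
    moreover have "k*(t*?S-2*?C+2) \<ge> 0" using c assms by simp
    ultimately have "6*(?C-1)*(?C-k) + (?C-1)^2 + k*(t*?S-2*?C+2) \<ge> 0" by linarith
    thus ?thesis using assms k2 by simp
  qed
  have "8 * Pf k t * (cosh t - k) - (2 * k * t * cosh t - k * (1 + k^2) * sinh t) * Phi k t
     = 8*(1-k)^3*(?C-k) + 2*k*((1-k)*(8*(t*?S-2*?C+2)*?C - (t*?C-?S)*?S) + k*(8*(t*?S-2*?C+2)*(?C-1) - (t*?C-?S)*(?S-t)))
     + k*(1-k^2)*(6*(?C-1)*(?C-k) + (?C-1)^2 + k*(t*?S-2*?C+2))"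
    unfolding Pf_def Phi_def by (rule keyB_alg[OF S2])
  with t1 t2 t3 show ?thesis by linarith
qed

lemma ratioB: assumes "0 < k" "k < 1" "0 < t1" "t1 \<le> t2"
  shows "Pf k t2 * Phi k t1 ^ 8 \<le> Pf k t1 * Phi k t2 ^ 8"
proof (rule ratio_decr[where X'="\<lambda>t. 2 * k * t * cosh t - k * (1 + k^2) * sinh t" and Y'="\<lambda>t. cosh t - k"])
  show "((\<lambda>t. Pf k t) has_real_derivative 2 * k * t * cosh t - k * (1 + k^2) * sinh t) (at t)" for t
    by (rule Pf_deriv)
  show "((\<lambda>t. Phi k t) has_real_derivative cosh t - k) (at t)" for t by (rule Phi_deriv)
  show "t > 0 \<Longrightarrow> Phi k t > 0" for t using Phi_pos assms by simp
  show "(2 * k * t * cosh t - k * (1 + k^2) * sinh t) * Phi k t \<le> real 8 * Pf k t * (cosh t - k)" if "t > 0" for t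
    using keyB[of k t] assms that by simp
qed (use assms in auto)

definition Qf :: "real \<Rightarrow> real \<Rightarrow> real" where "Qf k t = Pf k t / (cosh t - k)"

lemma Qf_pos: "0 < k \<Longrightarrow> k < 1 \<Longrightarrow> t \<ge> 0 \<Longrightarrow> Qf k t > 0"
  unfolding Qf_def using Pf_pos[of k t] cosh_real_ge_1[of t] by simp

lemma L2:
  fixes k t1 t2 K :: real
  assumes k: "0 < k" "k < 1" and t: "0 < t1" "t1 \<le> t2" and K: "K \<ge> 1"
    and ph: "Phi k t2 \<le> K * Phi k t1"
  shows "Qf k t1 \<le> K * Qf k t2" "Qf k t2 \<le> K^8 * Qf k t1"
proof -
  define D1 where "D1 = cosh t1 - k"
  define D2 where "D2 = cosh t2 - k"
  have D1: "D1 > 0" unfolding D1_def using cosh_real_ge_1[of t1] k by simp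
  have D2: "D2 > 0" unfolding D2_def using cosh_real_ge_1[of t2] k by simp
  have D12: "D1 \<le> D2" unfolding D1_def D2_def using t cosh_real_nonneg_le_iff[of t1 t2] by simp
  have F1: "Phi k t1 > 0" using Phi_pos k t by simp
  have F2: "Phi k t2 > 0" using Phi_pos k t by simp
  have P1: "Pf k t1 > 0" using Pf_pos k t by simp
  have P2: "Pf k t2 > 0" using Pf_pos k t by simp
  have "D2 * Phi k t1 \<le> D1 * Phi k t2" unfolding D1_def D2_def by (rule ratioA[OF k t])
  also have "\<dots> \<le> D1 * (K * Phi k t1)" using ph D1 by (simp add: mult_left_mono)
  finally have "D2 * Phi k t1 \<le> (K * D1) * Phi k t1" by (simp add: algebra_simps)
  then have D2K: "D2 \<le> K * D1" using F1 by simp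
  have Pm: "Pf k t1 \<le> Pf k t2" using Pf_mono k t by simp
  have "Pf k t2 * Phi k t1 ^ 8 \<le> Pf k t1 * Phi k t2 ^ 8" by (rule ratioB[OF k t])
  also have "\<dots> \<le> Pf k t1 * (K * Phi k t1) ^ 8"
    using P1 F2 ph by (intro mult_left_mono power_mono) auto
  finally have "Pf k t2 * Phi k t1 ^ 8 \<le> (K^8 * Pf k t1) * Phi k t1 ^ 8" by (simp add: algebra_simps power_mult_distrib)
  then have P2K: "Pf k t2 \<le> K^8 * Pf k t1" using F1 by simp
  have "Qf k t1 = Pf k t1 / D1" unfolding Qf_def D1_def ..
  also have "\<dots> \<le> Pf k t2 / D1" using Pm D1 by (simp add: divide_right_mono)
  also have "\<dots> \<le> K * (Pf k t2 / D2)"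
    using D2K D1 D2 P2 by (simp add: field_simps mult_left_mono)
  also have "Pf k t2 / D2 = Qf k t2" unfolding Qf_def D2_def ..
  finally show "Qf k t1 \<le> K * Qf k t2" .
  have "Qf k t2 = Pf k t2 / D2" unfolding Qf_def D2_def ..
  also have "\<dots> \<le> Pf k t2 / D1" using D12 D1 P2 by (simp add: frac_le)
  also have "\<dots> \<le> (K^8 * Pf k t1) / D1" using P2K D1 by (simp add: divide_right_mono)
  also have "\<dots> = K^8 * Qf k t1" unfolding Qf_def D1_def by simp
  finally show "Qf k t2 \<le> K^8 * Qf k t1" .
qed

lemma L1:
  fixes k1 k2 t K :: real
  assumes k: "0 < k2" "k2 \<le> k1" "k1 < 1" and t: "t \<ge> 0" and K: "K \<ge> 1"
    and r1: "k1 \<le> K * k2" and r2: "1 - k2 \<le> K * (1 - k1)"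
  shows "Qf k1 t \<le> 2 * K^2 * Qf k2 t" "Qf k2 t \<le> K^3 * Qf k1 t"
proof -
  define c where "c = t * sinh t - 2 * cosh t + 2"
  define b where "b = cosh t - 1"
  have c: "c \<ge> 0" unfolding c_def using c_nonneg[OF t] .
  have b: "b \<ge> 0" unfolding b_def using cosh_real_ge_1[of t] by simp
  have P: "Pf k t = (1 - k)^3 + 2 * k * c + k * (1 - k) * (1 + k) * b" for k
    unfolding Pf_decomp c_def b_def by (simp add: algebra_simps power2_eq_square)
  have k1p: "0 < k1" "1 - k1 > 0" "1 - k2 > 0" using k by auto
  have a1: "(1 - k1)^3 \<le> 2 * K * (1 - k2)^3"
  proof -
    have "(1 - k1)^3 \<le> (1 - k2)^3" using k by (intro power_mono) auto
    also have "\<dots> \<le> 2 * K * (1 - k2)^3" using K k1p by simp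
    finally show ?thesis .
  qed
  have a2: "2 * k1 * c \<le> 2 * K * (2 * k2 * c)"
  proof -
    have "2 * k1 * c \<le> 2 * (K * k2) * c" using r1 c by (simp add: mult_right_mono)
    also have "\<dots> \<le> 2 * K * (2 * k2 * c)" using mult_right_mono[of 1 "2*K", of "2 * k2 * c"] K k c by (simp add: algebra_simps)
    finally show ?thesis .
  qed
  have a3: "k1 * (1 - k1) * (1 + k1) * b \<le> 2 * K * (k2 * (1 - k2) * (1 + k2) * b)"
  proof -
    have "k1 * (1 - k1) \<le> (K * k2) * (1 - k2)" using r1 k k1p by (intro mult_mono) auto
    moreover have "1 + k1 \<le> 2 * (1 + k2)" using k by simp
    ultimately have "k1 * (1 - k1) * (1 + k1) \<le> (K * k2) * (1 - k2) * (2 * (1 + k2))"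
      using k k1p K by (intro mult_mono[of "k1 * (1 - k1)"]) auto
    then have "k1 * (1 - k1) * (1 + k1) * b \<le> (K * k2) * (1 - k2) * (2 * (1 + k2)) * b"
      using b by (rule mult_right_mono)
    thus ?thesis by (simp add: algebra_simps)
  qed
  have Pk1: "Pf k1 t \<le> 2 * K * Pf k2 t" unfolding P using a1 a2 a3 by (simp add: algebra_simps)
  have b1: "(1 - k2)^3 \<le> K^3 * (1 - k1)^3"
  proof -
    have "(1 - k2)^3 \<le> (K * (1 - k1))^3" using r2 k by (intro power_mono) auto
    thus ?thesis by (simp add: power_mult_distrib)
  qed
  have K3: "K^3 \<ge> 1" using K by simp
  have b2: "2 * k2 * c \<le> K^3 * (2 * k1 * c)"
  proof -
    have "2 * k2 * c \<le> 2 * k1 * c" using k c by (simp add: mult_right_mono)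
    also have "\<dots> \<le> K^3 * (2 * k1 * c)" using mult_right_mono[OF K3, of "2 * k1 * c"] k1p c by simp
    finally show ?thesis .
  qed
  have b3: "k2 * (1 - k2) * (1 + k2) * b \<le> K^3 * (k1 * (1 - k1) * (1 + k1) * b)"
  proof -
    have "k2 * (1 - k2) \<le> k1 * (K * (1 - k1))" using r2 k k1p by (intro mult_mono) auto
    moreover have "1 + k2 \<le> 1 + k1" using k by simp
    ultimately have "k2 * (1 - k2) * (1 + k2) \<le> k1 * (K * (1 - k1)) * (1 + k1)"
      using k k1p K by (intro mult_mono[of "k2 * (1 - k2)"]) auto
    also have "\<dots> \<le> K^3 * (k1 * (1 - k1) * (1 + k1))"
    proof -
      have "1 \<le> K * K" using mult_mono[OF K K] K by simp
      then have "K * 1 \<le> K * (K * K)" using K by (intro mult_left_mono) auto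
      then have KK: "K \<le> K^3" by (simp add: power3_eq_cube)
      have "0 \<le> k1 * (1 - k1) * (1 + k1)" using k1p k by simp
      from mult_right_mono[OF KK this] show ?thesis by (simp add: algebra_simps)
    qed
    finally have "k2 * (1 - k2) * (1 + k2) \<le> K^3 * (k1 * (1 - k1) * (1 + k1))" .
    from mult_right_mono[OF this b] show ?thesis by (simp add: algebra_simps)
  qed
  have Pk2: "Pf k2 t \<le> K^3 * Pf k1 t" unfolding P using b1 b2 b3 by (simp add: algebra_simps)
  have C1: "cosh t \<ge> 1" by (rule cosh_real_ge_1)
  have D1: "cosh t - k1 > 0" "cosh t - k2 > 0" using C1 k by auto
  have D12: "cosh t - k1 \<le> cosh t - k2" using k by simp
  have D21: "cosh t - k2 \<le> K * (cosh t - k1)"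
  proof -
    have "cosh t - k2 = (cosh t - 1) + (1 - k2)" by simp
    also have "\<dots> \<le> K * (cosh t - 1) + K * (1 - k1)" using r2 C1 K
      by (intro add_mono) (auto intro: mult_right_mono[of 1 K, simplified])
    finally show ?thesis by (simp add: algebra_simps)
  qed
  have P2: "Pf k2 t > 0" "Pf k1 t > 0" using Pf_pos k t by auto
  have "Qf k1 t = Pf k1 t / (cosh t - k1)" unfolding Qf_def ..
  also have "\<dots> \<le> 2 * K * Pf k2 t / (cosh t - k1)" using Pk1 D1 by (simp add: divide_right_mono)
  also have "\<dots> \<le> 2 * K * Pf k2 t / ((cosh t - k2) / K)"
  proof -
    have e1: "(cosh t - k2) / K \<le> cosh t - k1" using D21 K by (simp add: divide_le_eq mult.commute)
    have e2: "0 < (cosh t - k1) * ((cosh t - k2) / K)" using D1 K by simp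
    show ?thesis by (rule divide_left_mono[OF e1 _ e2]) (use K P2 in auto)
  qed
  also have "\<dots> = 2 * K^2 * Qf k2 t" unfolding Qf_def using K by (simp add: field_simps power2_eq_square)
  finally show "Qf k1 t \<le> 2 * K^2 * Qf k2 t" .
  have "Qf k2 t = Pf k2 t / (cosh t - k2)" unfolding Qf_def ..
  also have "\<dots> \<le> K^3 * Pf k1 t / (cosh t - k2)" using Pk2 D1 by (simp add: divide_right_mono)
  also have "\<dots> \<le> K^3 * Pf k1 t / (cosh t - k1)"
    using D12 D1 K P2 by (intro divide_left_mono) auto
  also have "\<dots> = K^3 * Qf k1 t" unfolding Qf_def by simp
  finally show "Qf k2 t \<le> K^3 * Qf k1 t" .
qed

definition Tn :: "real \<Rightarrow> real \<Rightarrow> real" where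
  "Tn k y = the_inv_into {0..} (Phi k) y"

lemma Phi_inj: "k < 1 \<Longrightarrow> inj_on (Phi k) {0..}"
proof (rule inj_onI)
  fix x y assume k: "k < 1" and x: "x \<in> {0..}" and y: "y \<in> {0..}" and e: "Phi k x = Phi k y"
  show "x = y"
  proof (rule ccontr)
    assume "x \<noteq> y"
    then consider "x < y" | "y < x" by linarith
    then show False
      using Phi_strict_mono[OF k, of x y] Phi_strict_mono[OF k, of y x] x y e by (cases; auto)
  qed
qed

lemma Phi_surj: assumes k: "0 < k" "k < 1" and y: "y \<ge> 0" shows "\<exists>t\<ge>0. Phi k t = y"
proof -
  define T where "T = y / (1 - k)"
  have T: "T \<ge> 0" unfolding T_def using k y by simp
  have "Phi k T \<ge> (1 - k) * T" unfolding Phi_def using sinh_ge_t[OF T] by (simp add: algebra_simps)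
  also have "(1 - k) * T = y" unfolding T_def using k by simp
  finally have "Phi k 0 \<le> y" "y \<le> Phi k T" using y by (auto simp: Phi_def)
  moreover have "\<forall>x. 0 \<le> x \<and> x \<le> T \<longrightarrow> isCont (Phi k) x"
    unfolding Phi_def by (auto intro!: continuous_intros)
  ultimately obtain t where "0 \<le> t" "t \<le> T" "Phi k t = y"
    using IVT[of "Phi k" 0 y T] T by auto
  thus ?thesis by auto
qed

lemma Tn: assumes k: "0 < k" "k < 1" and y: "y \<ge> 0"
  shows "Tn k y \<ge> 0" "Phi k (Tn k y) = y"
proof -
  obtain t where t: "t \<ge> 0" "Phi k t = y" using Phi_surj[OF k y] by blast
  have "Tn k y = t" unfolding Tn_def
    by (rule the_inv_into_f_eq[OF Phi_inj[OF k(2)]]) (use t in auto)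
  thus "Tn k y \<ge> 0" "Phi k (Tn k y) = y" using t by auto
qed

lemma Tn_unique: assumes k: "0 < k" "k < 1" and t: "t \<ge> 0" "Phi k t = y" shows "Tn k y = t"
  unfolding Tn_def by (rule the_inv_into_f_eq[OF Phi_inj[OF k(2)]]) (use t in auto)

lemma Gk_cosh: assumes "t \<ge> 0" shows "Gk k (cosh t) = Phi k t"
proof -
  have "sqrt ((cosh t)^2 - 1) = sinh t" using assms by (simp add: cosh_square_eq)
  moreover have "ln (cosh t + sinh t) = t" by (simp add: cosh_plus_sinh)
  ultimately show ?thesis unfolding Gk_def Phi_def by simp
qed

lemma Gk_inj: assumes "k < 1" shows "inj_on (Gk k) {1..}"
proof (rule inj_onI)
  fix x y :: real assume x: "x \<in> {1..}" and y: "y \<in> {1..}" and e: "Gk k x = Gk k y"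
  have x': "cosh (arcosh x) = x" "arcosh x \<ge> 0" using x by auto
  have y': "cosh (arcosh y) = y" "arcosh y \<ge> 0" using y by auto
  have "Phi k (arcosh x) = Phi k (arcosh y)"
    using e Gk_cosh[OF x'(2), of k] Gk_cosh[OF y'(2), of k] x'(1) y'(1) by simp
  then have "arcosh x = arcosh y" using Phi_inj[OF assms] x'(2) y'(2) by (auto dest: inj_onD)
  then show "x = y" using x'(1) y'(1) by metis
qed

lemma Hk_eq: assumes k: "0 < k" "k < 1" and y: "y \<ge> 0" shows "Hk k y = cosh (Tn k y)"
  unfolding Hk_def
  by (rule the_inv_into_f_eq[OF Gk_inj[OF k(2)]])
     (use Tn[OF k y] Gk_cosh[of "Tn k y" k] cosh_real_ge_1 in auto)

definition Qb :: "real \<Rightarrow> real \<Rightarrow> real \<Rightarrow> real" where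
  "Qb m l b = sqrt (1 + 4 * b^2 * l / m^2)"
definition Bf :: "real \<Rightarrow> real \<Rightarrow> real" where "Bf m b = m / (2 * b^2)"
definition Tt :: "real \<Rightarrow> real \<Rightarrow> real \<Rightarrow> real \<Rightarrow> real" where
  "Tt m \<theta> l b = Tn (kappa m b l) (\<bar>\<theta>\<bar> / pfun m b l)"

context
  fixes m l :: real assumes m: "m > 0" and l: "l > 0"
begin

lemma Qb_gt1: "b > 0 \<Longrightarrow> Qb m l b > 1"
  unfolding Qb_def using m l by simp

lemma kappa_eq: "kappa m b l = 1 / Qb m l b"
  unfolding kappa_def Qb_def ..

lemma kappa_bounds: "b > 0 \<Longrightarrow> 0 < kappa m b l \<and> kappa m b l < 1"
  unfolding kappa_eq using Qb_gt1[of b] by simp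

lemma pfun_eq: "b > 0 \<Longrightarrow> pfun m b l = Bf m b * Qb m l b"
  unfolding pfun_def kappa_eq Bf_def using Qb_gt1[of b] by simp

lemma Bf_pos: "b > 0 \<Longrightarrow> Bf m b > 0" unfolding Bf_def using m by simp

lemma pfun_pos: "b > 0 \<Longrightarrow> pfun m b l > 0"
  using pfun_eq[of b] Bf_pos[of b] Qb_gt1[of b] by simp

lemma pfun_kappa: "b > 0 \<Longrightarrow> pfun m b l * kappa m b l = Bf m b"
  using pfun_eq[of b] kappa_eq[of b] Qb_gt1[of b] by simp

lemma Tt_props: assumes b: "b > 0"
  shows "Tt m \<theta> l b \<ge> 0"
    "pfun m b l * sinh (Tt m \<theta> l b) - Bf m b * Tt m \<theta> l b = \<bar>\<theta>\<bar>"
    "Rfun m \<theta> b l = pfun m b l * cosh (Tt m \<theta> l b) - Bf m b"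
proof -
  have k: "0 < kappa m b l" "kappa m b l < 1" using kappa_bounds[OF b] by auto
  have y: "\<bar>\<theta>\<bar> / pfun m b l \<ge> 0" using pfun_pos[OF b] by simp
  note T = Tn[OF k y]
  show "Tt m \<theta> l b \<ge> 0" unfolding Tt_def using T by simp
  have "pfun m b l * Phi (kappa m b l) (Tt m \<theta> l b) = \<bar>\<theta>\<bar>"
    unfolding Tt_def using T(2) pfun_pos[OF b] by simp
  then show "pfun m b l * sinh (Tt m \<theta> l b) - Bf m b * Tt m \<theta> l b = \<bar>\<theta>\<bar>"
    unfolding Phi_def using pfun_kappa[OF b] by (simp add: algebra_simps)
  show "Rfun m \<theta> b l = pfun m b l * cosh (Tt m \<theta> l b) - Bf m b"
    unfolding Rfun_def Hk_eq[OF k y] Tt_def using pfun_kappa[OF b] by simp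
qed

end

lemma cont_root:
  fixes h :: "real \<Rightarrow> real \<Rightarrow> real" and T :: "real \<Rightarrow> real" and x c :: real
  assumes x: "x > 0"
   and hc: "\<And>t. isCont (\<lambda>y. h y t) x"
   and hm: "\<And>y t1 t2. y > 0 \<Longrightarrow> 0 \<le> t1 \<Longrightarrow> t1 < t2 \<Longrightarrow> h y t1 < h y t2"
   and T0: "\<And>y. y > 0 \<Longrightarrow> T y \<ge> 0"
   and Th: "\<And>y. y > 0 \<Longrightarrow> h y (T y) = c"
  shows "isCont T x"
proof -
  have ev0: "\<forall>\<^sub>F y in at x. 0 < y" using order_tendstoD(1)[OF tendsto_ident_at x] .
  show ?thesis unfolding isCont_def
  proof (rule order_tendstoI)
    fix a assume a: "a < T x"
    show "\<forall>\<^sub>F y in at x. a < T y"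
    proof (cases "a < 0")
      case True show ?thesis using ev0
        by eventually_elim (use T0 True in force)
    next
      case False
      have "h x a < c" using hm[OF x _ a] False Th[OF x] by simp
      then have "\<forall>\<^sub>F y in at x. h y a < c"
        using order_tendstoD(2)[OF hc[of a, unfolded isCont_def]] by blast
      then show ?thesis using ev0
      proof eventually_elim
        case (elim y)
        show "a < T y"
        proof (rule ccontr)
          assume "\<not> a < T y" then have "T y \<le> a" by simp
          then have "h y (T y) \<le> h y a" using hm[of y "T y" a] elim T0[of y]
            by (cases "T y = a") auto
          thus False using elim Th[of y] by simp
        qed
      qed
    qed
  next
    fix a assume a: "a > T x"
    have "h x a > c" using hm[OF x T0[OF x] a] Th[OF x] by simp
    then have "\<forall>\<^sub>F y in at x. h y a > c"
      using order_tendstoD(1)[OF hc[of a, unfolded isCont_def]] by blast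
    then show "\<forall>\<^sub>F y in at x. T y < a" using ev0
    proof eventually_elim
      case (elim y)
      show "T y < a"
      proof (rule ccontr)
        assume "\<not> T y < a" then have "a \<le> T y" by simp
        moreover have "a \<ge> 0" using a T0[OF x] by simp
        ultimately have "h y a \<le> h y (T y)" using hm[of y a "T y"] elim
          by (cases "T y = a") auto
        thus False using elim Th[of y] by simp
      qed
    qed
  qed
qed

lemma gen: "- ((a::real) / d) * s + (b / d) * t = (- a * s + b * t) / d"
  by (simp add: add_divide_distrib diff_divide_distrib)

lemma implicit_deriv:
  fixes A B T :: "real \<Rightarrow> real" and x c A' B' :: real
  assumes dA: "(A has_real_derivative A') (at x)" and dB: "(B has_real_derivative B') (at x)"
   and cT: "isCont T x"
   and eq: "\<forall>\<^sub>F y in at x. A y * sinh (T y) - B y * T y = c"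
   and eqx: "A x * sinh (T x) - B x * T x = c"
   and nz: "A x * cosh (T x) - B x \<noteq> 0"
  shows "(T has_real_derivative (B' * T x - A' * sinh (T x)) / (A x * cosh (T x) - B x)) (at x)"
proof -
  have ds: "(sinh has_real_derivative cosh (T x)) (at (T x))"
    using has_field_derivative_sinh[OF DERIV_ident] by simp
  obtain \<sigma> where s1: "\<And>z. sinh z - sinh (T x) = \<sigma> z * (z - T x)" and s2: "isCont \<sigma> (T x)"
      and s3: "\<sigma> (T x) = cosh (T x)"
    using CARAT_DERIV[THEN iffD1, OF ds] by blast
  have Tlim: "(T \<longlongrightarrow> T x) (at x)" using cT by (simp add: isCont_def)
  have slim: "((\<lambda>y. \<sigma> (T y)) \<longlongrightarrow> cosh (T x)) (at x)"
    using isCont_tendsto_compose[OF s2 Tlim] s3 by simp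
  have den: "((\<lambda>y. A x * \<sigma> (T y) - B x) \<longlongrightarrow> A x * cosh (T x) - B x) (at x)"
    by (intro tendsto_intros slim)
  have qA: "((\<lambda>y. (A y - A x) / (y - x)) \<longlongrightarrow> A') (at x)" using dA by (simp add: has_field_derivative_iff)
  have qB: "((\<lambda>y. (B y - B x) / (y - x)) \<longlongrightarrow> B') (at x)" using dB by (simp add: has_field_derivative_iff)
  have Slim: "((\<lambda>y. sinh (T y)) \<longlongrightarrow> sinh (T x)) (at x)"
    using isCont_tendsto_compose[OF isCont_sinh Tlim] .
  have num: "((\<lambda>y. - ((A y - A x) / (y - x)) * sinh (T y) + ((B y - B x) / (y - x)) * T y)
      \<longlongrightarrow> - A' * sinh (T x) + B' * T x) (at x)"
    by (intro tendsto_intros qA qB Slim Tlim)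
  have lim: "((\<lambda>y. (- ((A y - A x) / (y - x)) * sinh (T y) + ((B y - B x) / (y - x)) * T y) / (A x * \<sigma> (T y) - B x))
      \<longlongrightarrow> (B' * T x - A' * sinh (T x)) / (A x * cosh (T x) - B x)) (at x)"
    using tendsto_divide[OF num den nz] by (simp add: algebra_simps)
  have evne: "\<forall>\<^sub>F y in at x. A x * \<sigma> (T y) - B x \<noteq> 0" using tendsto_imp_eventually_ne[OF den nz] .
  have evx: "\<forall>\<^sub>F y in at x. y \<noteq> x" by (simp add: eventually_at_filter)
  have "\<forall>\<^sub>F y in at x. (- ((A y - A x) / (y - x)) * sinh (T y) + ((B y - B x) / (y - x)) * T y) / (A x * \<sigma> (T y) - B x)
        = (T y - T x) / (y - x)"
    using eq evne evx
  proof eventually_elim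
    case (elim y)
    have "A y * sinh (T y) - B y * T y = A x * sinh (T x) - B x * T x" using elim(1) eqx by simp
    then have "(A y - A x) * sinh (T y) + A x * (sinh (T y) - sinh (T x)) - (B y - B x) * T y - B x * (T y - T x) = 0"
      by (simp add: algebra_simps)
    then have "(A y - A x) * sinh (T y) + A x * (\<sigma> (T y) * (T y - T x)) - (B y - B x) * T y - B x * (T y - T x) = 0"
      using s1[of "T y"] by simp
    then have e: "(T y - T x) * (A x * \<sigma> (T y) - B x) = - (A y - A x) * sinh (T y) + (B y - B x) * T y"
      by (simp add: algebra_simps)
    have yx: "y - x \<noteq> 0" using elim(3) by simp
    have "(- ((A y - A x) / (y - x)) * sinh (T y) + ((B y - B x) / (y - x)) * T y)
        = (- (A y - A x) * sinh (T y) + (B y - B x) * T y) / (y - x)"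
      by (rule gen)
    also have "\<dots> = (T y - T x) * (A x * \<sigma> (T y) - B x) / (y - x)" using e by simp
    finally show ?case using elim(2) yx by simp
  qed
  from Lim_transform_eventually[OF lim this] show ?thesis by (simp add: has_field_derivative_iff)
qed

lemma alg_R:
  fixes B Q x t :: real
  assumes B: "B > 0" and Q: "Q > 1" and x: "x > 0"
  shows "(-(B/(x*Q))*(Q^2+1)) * cosh t + (B*Q) * sinh t * (((-2*B/x)*t - (-(B/(x*Q))*(Q^2+1)) * sinh t) / ((B*Q) * cosh t - B)) - (-2*B/x)
       = -(B*Q/x) * Qf (1/Q) t"
proof -
  have S2: "sinh t ^ 2 = cosh t ^ 2 - 1" by (simp add: cosh_square_eq)
  have C1: "cosh t \<ge> 1" by (rule cosh_real_ge_1)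
  have QC: "Q * cosh t > 1" using Q C1 by (metis less_le_trans mult_le_cancel_left1 not_le order_less_imp_le zero_less_one)
  have d1: "(B*Q) * cosh t - B \<noteq> 0" using QC B by (simp add: algebra_simps)
  have d2: "cosh t - 1/Q \<noteq> 0" using QC Q by (simp add: field_simps)
  have d3: "Q * cosh t - 1 \<noteq> 0" using QC by simp
  show ?thesis
    unfolding Qf_def Pf_def using B Q x d1 d2 d3 S2
    by (simp add: field_simps power2_eq_square power3_eq_cube) algebra
qed

context
  fixes m l :: real assumes m: "m > 0" and l: "l > 0"
begin

lemma dBf: assumes x: "x > 0" shows "(Bf m has_real_derivative -(2 * Bf m x / x)) (at x)"
proof -
  have "((\<lambda>b. m / (2 * b^2)) has_real_derivative -(2 * (m / (2 * x^2)) / x)) (at x)"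
    using x by (auto intro!: derivative_eq_intros simp: field_simps power2_eq_square power3_eq_cube)
  thus ?thesis unfolding Bf_def[abs_def] .
qed

lemma dQb: assumes x: "x > 0" shows "(Qb m l has_real_derivative (Qb m l x ^ 2 - 1) / (x * Qb m l x)) (at x)"
proof -
  have pos: "0 < 1 + 4 * x^2 * l / m^2" using m l by (simp add: add_pos_nonneg)
  have "((\<lambda>b. sqrt (1 + 4 * b^2 * l / m^2)) has_real_derivative
        (4 * x * l / m^2) / sqrt (1 + 4 * x^2 * l / m^2)) (at x)"
    using pos m by (auto intro!: derivative_eq_intros simp: field_simps power2_eq_square)
  moreover have "(Qb m l x ^ 2 - 1) / (x * Qb m l x) = (4 * x * l / m^2) / sqrt (1 + 4 * x^2 * l / m^2)"
    unfolding Qb_def using pos x m by (simp add: field_simps power2_eq_square)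
  ultimately show ?thesis unfolding Qb_def[abs_def] by simp
qed

lemma dA: assumes x: "x > 0"
  shows "((\<lambda>b. pfun m b l) has_real_derivative -(Bf m x / (x * Qb m l x)) * (Qb m l x ^ 2 + 1)) (at x)"
proof -
  have Q: "Qb m l x > 1" using Qb_gt1[OF m l x] .
  have "((\<lambda>b. Bf m b * Qb m l b) has_real_derivative
        (-(2 * Bf m x / x)) * Qb m l x + ((Qb m l x ^ 2 - 1) / (x * Qb m l x)) * Bf m x) (at x)"
    by (rule DERIV_mult[OF dBf[OF x] dQb[OF x]])
  moreover have "(-(2 * Bf m x / x)) * Qb m l x + ((Qb m l x ^ 2 - 1) / (x * Qb m l x)) * Bf m x
      = -(Bf m x / (x * Qb m l x)) * (Qb m l x ^ 2 + 1)"
    using Q x by (simp add: field_simps power2_eq_square)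
  ultimately have d: "((\<lambda>b. Bf m b * Qb m l b) has_real_derivative -(Bf m x / (x * Qb m l x)) * (Qb m l x ^ 2 + 1)) (at x)"
    by simp
  show ?thesis
    by (rule has_field_derivative_transform_within_open[OF d, of "{0<..}"])
       (use x pfun_eq[OF m l] in auto)
qed

lemma Tt_cont: assumes x: "x > 0" shows "isCont (Tt m \<theta> l) x"
proof (rule cont_root[where h="\<lambda>y t. pfun m y l * sinh t - Bf m y * t" and c="\<bar>\<theta>\<bar>", OF x])
  show "isCont (\<lambda>y. pfun m y l * sinh t - Bf m y * t) x" for t
    using DERIV_isCont[OF dA[OF x]] DERIV_isCont[OF dBf[OF x]] by (auto intro!: continuous_intros)
  show "pfun m y l * sinh t1 - Bf m y * t1 < pfun m y l * sinh t2 - Bf m y * t2"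
    if "y > 0" "0 \<le> t1" "t1 < t2" for y t1 t2
  proof -
    have k: "kappa m y l < 1" using kappa_bounds[OF m l that(1)] by simp
    have "Phi (kappa m y l) t1 < Phi (kappa m y l) t2" by (rule Phi_strict_mono[OF k that(2,3)])
    then have "pfun m y l * Phi (kappa m y l) t1 < pfun m y l * Phi (kappa m y l) t2"
      using pfun_pos[OF m l that(1)] by simp
    thus ?thesis unfolding Phi_def using pfun_kappa[OF m l that(1)] by (simp add: algebra_simps)
  qed
  show "Tt m \<theta> l y \<ge> 0" if "y > 0" for y using Tt_props[OF m l that] by simp
  show "pfun m y l * sinh (Tt m \<theta> l y) - Bf m y * Tt m \<theta> l y = \<bar>\<theta>\<bar>" if "y > 0" for y
    using Tt_props[OF m l that] by simp
qed

lemma dR: assumes x: "x > 0"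
  shows "((\<lambda>b. Rfun m \<theta> b l) has_real_derivative
          -(Bf m x * Qb m l x / x) * Qf (kappa m x l) (Tt m \<theta> l x)) (at x)"
proof -
  define A where "A = (\<lambda>b. pfun m b l)"
  define B where "B = Bf m"
  define T where "T = Tt m \<theta> l"
  define Q where "Q = Qb m l x"
  define A' where "A' = -(B x / (x * Q)) * (Q ^ 2 + 1)"
  define B' where "B' = -(2 * B x / x)"
  have Q1: "Q > 1" unfolding Q_def using Qb_gt1[OF m l x] .
  have Bp: "B x > 0" unfolding B_def using Bf_pos[OF m l x] .
  have Ax: "A x = B x * Q" unfolding A_def B_def Q_def using pfun_eq[OF m l x] .
  have dA': "(A has_real_derivative A') (at x)" unfolding A_def A'_def B_def Q_def using dA[OF x] .
  have dB': "(B has_real_derivative B') (at x)" unfolding B_def B'_def using dBf[OF x] .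
  have ev0: "\<forall>\<^sub>F y in at x. 0 < y" using order_tendstoD(1)[OF tendsto_ident_at x] .
  have eq: "\<forall>\<^sub>F y in at x. A y * sinh (T y) - B y * T y = \<bar>\<theta>\<bar>"
    using ev0 by eventually_elim (use Tt_props[OF m l] in \<open>auto simp: A_def B_def T_def\<close>)
  have eqx: "A x * sinh (T x) - B x * T x = \<bar>\<theta>\<bar>"
    using Tt_props[OF m l x] by (simp add: A_def B_def T_def)
  have C1: "cosh (T x) \<ge> 1" by (rule cosh_real_ge_1)
  have QC: "Q * cosh (T x) > 1" using Q1 C1 by (metis less_le_trans mult_le_cancel_left1 not_le order_less_imp_le zero_less_one)
  have nz: "A x * cosh (T x) - B x \<noteq> 0" unfolding Ax using QC Bp by (simp add: algebra_simps)
  have dT: "(T has_real_derivative (B' * T x - A' * sinh (T x)) / (A x * cosh (T x) - B x)) (at x)"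
    by (rule implicit_deriv[OF dA' dB' _ eq eqx nz]) (unfold T_def, rule Tt_cont[OF x])
  have dRexp: "((\<lambda>b. A b * cosh (T b) - B b) has_real_derivative
      A' * cosh (T x) + A x * (sinh (T x) * ((B' * T x - A' * sinh (T x)) / (A x * cosh (T x) - B x))) - B') (at x)"
  proof -
    have dc: "((\<lambda>b. cosh (T b)) has_real_derivative sinh (T x) * ((B' * T x - A' * sinh (T x)) / (A x * cosh (T x) - B x))) (at x)"
      by (rule has_field_derivative_cosh[OF dT])
    from DERIV_diff[OF DERIV_mult[OF dA' dc] dB'] show ?thesis by (simp add: algebra_simps)
  qed
  have val: "A' * cosh (T x) + A x * (sinh (T x) * ((B' * T x - A' * sinh (T x)) / (A x * cosh (T x) - B x))) - B'
      = -(B x * Q / x) * Qf (1 / Q) (T x)"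
    using alg_R[OF Bp Q1 x, of "T x"] unfolding A'_def B'_def Ax by (simp add: algebra_simps)
  have kq: "kappa m x l = 1 / Q" unfolding Q_def using kappa_eq[OF m l] .
  have d2: "((\<lambda>b. A b * cosh (T b) - B b) has_real_derivative
      -(Bf m x * Qb m l x / x) * Qf (kappa m x l) (Tt m \<theta> l x)) (at x)"
    using dRexp unfolding val kq by (simp add: B_def Q_def T_def)
  show ?thesis
    by (rule has_field_derivative_transform_within_open[OF d2, of "{0<..}"])
       (use x Tt_props[OF m l] in \<open>auto simp: A_def B_def T_def\<close>)
qed

end

context
  fixes m l :: real assumes m: "m > 0" and l: "l > 0"
begin

lemma Qsq: "Qb m l b ^ 2 = 1 + 4 * b^2 * l / m^2"
  unfolding Qb_def using m l by (simp add: add_nonneg_nonneg)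

lemma Q_facts: assumes a: "0 < a1" "a1 \<le> a2" "a2 \<le> K * a1" and K: "K \<ge> 1"
  shows "Qb m l a1 \<le> Qb m l a2" "Qb m l a2 \<le> K * Qb m l a1"
proof -
  have sq: "a1^2 \<le> a2^2" using a by (intro power_mono) auto
  have sq2: "a2^2 \<le> K^2 * a1^2"
  proof -
    have "a2^2 \<le> (K * a1)^2" using a by (intro power_mono) auto
    thus ?thesis by (simp add: power_mult_distrib)
  qed
  have s: "4 * l / m^2 > 0" using m l by simp
  have "1 + 4 * a1^2 * l / m^2 \<le> 1 + 4 * a2^2 * l / m^2"
    using mult_right_mono[OF sq, of "4 * l / m^2"] s by (simp add: algebra_simps)
  then show "Qb m l a1 \<le> Qb m l a2" unfolding Qb_def by (rule real_sqrt_le_mono)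
  have K2: "K^2 \<ge> 1" using K by (simp add: one_le_power)
  have "1 + 4 * a2^2 * l / m^2 \<le> K^2 * (1 + 4 * a1^2 * l / m^2)"
  proof -
    have "4 * a2^2 * l / m^2 = a2^2 * (4 * l / m^2)" by simp
    also have "\<dots> \<le> (K^2 * a1^2) * (4 * l / m^2)" using mult_right_mono[OF sq2, of "4 * l / m^2"] s by simp
    finally have "4 * a2^2 * l / m^2 \<le> K^2 * (4 * a1^2 * l / m^2)" by (simp add: ac_simps)
    thus ?thesis using K2 by (simp add: algebra_simps)
  qed
  then have "sqrt (1 + 4 * a2^2 * l / m^2) \<le> sqrt (K^2 * (1 + 4 * a1^2 * l / m^2))" by (rule real_sqrt_le_mono)
  also have "\<dots> = K * sqrt (1 + 4 * a1^2 * l / m^2)" using K by (simp add: real_sqrt_mult)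
  finally show "Qb m l a2 \<le> K * Qb m l a1" unfolding Qb_def .
qed

lemma E_eq: assumes b: "b > 0" shows "pfun m b l - Bf m b = (2 * l / m) / (Qb m l b + 1)"
proof -
  have Q: "Qb m l b > 1" using Qb_gt1[OF m l b] .
  have "pfun m b l - Bf m b = Bf m b * (Qb m l b - 1)" using pfun_eq[OF m l b] by (simp add: algebra_simps)
  also have "Qb m l b - 1 = (Qb m l b ^ 2 - 1) / (Qb m l b + 1)" using Q by (simp add: field_simps power2_eq_square)
  also have "Qb m l b ^ 2 - 1 = 4 * b^2 * l / m^2" using Qsq by simp
  also have "Bf m b * (4 * b^2 * l / m^2 / (Qb m l b + 1)) = (Bf m b * (4 * b^2 * l / m^2)) / (Qb m l b + 1)"
    by simp
  also have "Bf m b * (4 * b^2 * l / m^2) = 2 * l / m" unfolding Bf_def using m b by (simp add: field_simps power2_eq_square)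
  finally show ?thesis .
qed

lemma psi_compare: assumes a: "0 < a1" "a1 \<le> a2" "a2 \<le> K * a1" and K: "K \<ge> 1" and t: "t \<ge> 0"
  shows "pfun m a2 l * sinh t - Bf m a2 * t \<le> pfun m a1 l * sinh t - Bf m a1 * t"
        "pfun m a1 l * sinh t - Bf m a1 * t \<le> K^2 * (pfun m a2 l * sinh t - Bf m a2 * t)"
proof -
  have a2p: "a2 > 0" using a by simp
  note Qf = Q_facts[OF a K]
  have Q1: "Qb m l a1 > 1" using Qb_gt1[OF m l a(1)] .
  have Q2: "Qb m l a2 > 1" using Qb_gt1[OF m l a2p] .
  define E1 where "E1 = pfun m a1 l - Bf m a1"
  define E2 where "E2 = pfun m a2 l - Bf m a2"
  have lm: "2 * l / m > 0" using l m by simp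
  have E12: "E2 \<le> E1" unfolding E1_def E2_def E_eq[OF a(1)] E_eq[OF a2p]
    using Qf(1) Q1 lm by (intro divide_left_mono) auto
  have QQ: "Qb m l a1 * Qb m l a2 > 0" using Q1 Q2 by simp
  have E21: "E1 \<le> K * E2"
  proof -
    have QK: "Qb m l a2 + 1 \<le> K * (Qb m l a1 + 1)" using Qf(2) K by (simp add: algebra_simps)
    have "(2 * l / m) / (Qb m l a1 + 1) \<le> (2 * l / m) / ((Qb m l a2 + 1) / K)"
    proof (rule divide_left_mono)
      show "(Qb m l a2 + 1) / K \<le> Qb m l a1 + 1" using QK K
        by (simp add: divide_le_eq mult.commute)
      show "0 \<le> 2 * l / m" using lm by simp
      show "0 < (Qb m l a1 + 1) * ((Qb m l a2 + 1) / K)" using Q1 Q2 K by simp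
    qed
    thus ?thesis unfolding E1_def E2_def E_eq[OF a(1)] E_eq[OF a2p] using K by (simp add: field_simps)
  qed
  have E2p: "E2 > 0" unfolding E2_def E_eq[OF a2p] using Q2 lm l m by (intro divide_pos_pos) auto
  have B12: "Bf m a2 \<le> Bf m a1" unfolding Bf_def using a m
    by (intro divide_left_mono mult_left_mono power_mono) auto
  have B21: "Bf m a1 \<le> K^2 * Bf m a2"
  proof -
    have "a2^2 \<le> K^2 * a1^2" using power_mono[OF a(3), of 2] a2p by (simp add: power_mult_distrib)
    then have "m / (2 * a1^2) \<le> m / (2 * (a2^2 / K^2))"
      using a m K by (intro divide_left_mono) (auto simp: field_simps)
    thus ?thesis unfolding Bf_def using K by (simp add: field_simps)
  qed
  have S: "sinh t \<ge> 0" and St: "sinh t - t \<ge> 0" using t sinh_ge_t[OF t] by auto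
  have psi: "pfun m b l * sinh t - Bf m b * t = (pfun m b l - Bf m b) * sinh t + Bf m b * (sinh t - t)" for b
    by (simp add: algebra_simps)
  show "pfun m a2 l * sinh t - Bf m a2 * t \<le> pfun m a1 l * sinh t - Bf m a1 * t"
    unfolding psi E1_def[symmetric] E2_def[symmetric]
    using mult_right_mono[OF E12 S] mult_right_mono[OF B12 St] by linarith
  have K2: "K \<le> K^2" using K by (simp add: power2_eq_square)
  have "E1 * sinh t \<le> K^2 * E2 * sinh t"
  proof -
    have "E1 \<le> K^2 * E2" using E21 mult_right_mono[OF K2, of E2] E2p by linarith
    thus ?thesis using S by (intro mult_right_mono) auto
  qed
  moreover have "Bf m a1 * (sinh t - t) \<le> K^2 * Bf m a2 * (sinh t - t)"
    using mult_right_mono[OF B21 St] by simp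
  ultimately show "pfun m a1 l * sinh t - Bf m a1 * t \<le> K^2 * (pfun m a2 l * sinh t - Bf m a2 * t)"
    unfolding psi E1_def[symmetric] E2_def[symmetric] by (simp add: algebra_simps)
qed

lemma L3: assumes a: "0 < a1" "a1 \<le> a2" "a2 \<le> K * a1" and K: "K \<ge> 1"
  shows "Tt m \<theta> l a1 \<le> Tt m \<theta> l a2"
        "Phi (kappa m a1 l) (Tt m \<theta> l a2) \<le> K^2 * Phi (kappa m a1 l) (Tt m \<theta> l a1)"
proof -
  have a2p: "a2 > 0" using a by simp
  define T1 where "T1 = Tt m \<theta> l a1"
  define T2 where "T2 = Tt m \<theta> l a2"
  define k where "k = kappa m a1 l"
  have k: "0 < k" "k < 1" unfolding k_def using kappa_bounds[OF m l a(1)] by auto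
  note P1 = Tt_props[OF m l a(1), of \<theta>, folded T1_def]
  note P2 = Tt_props[OF m l a2p, of \<theta>, folded T2_def]
  have pp: "pfun m a1 l > 0" using pfun_pos[OF m l a(1)] .
  have psiPhi: "pfun m a1 l * sinh t - Bf m a1 * t = pfun m a1 l * Phi k t" for t
    unfolding Phi_def k_def using pfun_kappa[OF m l a(1)] by (simp add: algebra_simps)
  note pc = psi_compare[OF a K P2(1)]
  have e1: "pfun m a1 l * Phi k T1 = \<bar>\<theta>\<bar>" using P1(2) psiPhi by simp
  have e2: "pfun m a1 l * Phi k T2 \<ge> \<bar>\<theta>\<bar>" using pc(1) P2(2) psiPhi by simp
  have e3: "pfun m a1 l * Phi k T2 \<le> K^2 * \<bar>\<theta>\<bar>" using pc(2) P2(2) psiPhi by simp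
  have "pfun m a1 l * Phi k T1 \<le> pfun m a1 l * Phi k T2" using e1 e2 by simp
  then have i1: "Phi k T1 \<le> Phi k T2" using pp by simp
  have i2: "pfun m a1 l * Phi k T2 \<le> pfun m a1 l * (K^2 * Phi k T1)" using e3 unfolding e1[symmetric] by (simp add: ac_simps)
  show "Tt m \<theta> l a1 \<le> Tt m \<theta> l a2"
  proof (rule ccontr)
    assume "\<not> Tt m \<theta> l a1 \<le> Tt m \<theta> l a2"
    then have "T2 < T1" unfolding T1_def T2_def by simp
    from Phi_strict_mono[OF k(2) P2(1) this] i1 show False by simp
  qed
  show "Phi (kappa m a1 l) (Tt m \<theta> l a2) \<le> K^2 * Phi (kappa m a1 l) (Tt m \<theta> l a1)"
    using i2 pp unfolding k_def T1_def T2_def by simp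
qed

end

context
  fixes m l :: real assumes m: "m > 0" and l: "l > 0"
begin

lemma om_gen: assumes q: "(q::real) > 1" shows "1 - 1 / q = (q^2 - 1) / (q * (q + 1))"
proof -
  have "q^2 - 1 = (q - 1) * (q + 1)" by (simp add: algebra_simps power2_eq_square)
  then have "(q^2 - 1) / (q * (q + 1)) = (q - 1) / q" using q by simp
  also have "\<dots> = 1 - 1 / q" using q by (simp add: diff_divide_distrib)
  finally show ?thesis by simp
qed

definition Fm :: "real \<Rightarrow> real" where "Fm b = Bf m b * Qb m l b / b"

lemma Fm_eq: "b > 0 \<Longrightarrow> Fm b = m * Qb m l b / (2 * b^3)"
  unfolding Fm_def Bf_def by (simp add: field_simps power2_eq_square power3_eq_cube)

lemma Fm_pos: "b > 0 \<Longrightarrow> Fm b > 0"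
  unfolding Fm_def using Bf_pos[OF m l] Qb_gt1[OF m l] by (simp add: less_trans[OF zero_less_one])

lemma absR: assumes b: "b > 0"
  shows "\<bar>deriv (\<lambda>b. Rfun m \<theta> b l) b\<bar> = Fm b * Qf (kappa m b l) (Tt m \<theta> l b)"
proof -
  have k: "0 < kappa m b l" "kappa m b l < 1" using kappa_bounds[OF m l b] by auto
  have q: "Qf (kappa m b l) (Tt m \<theta> l b) > 0" using Qf_pos[OF k] Tt_props(1)[OF m l b] by simp
  have "deriv (\<lambda>b. Rfun m \<theta> b l) b = -(Fm b * Qf (kappa m b l) (Tt m \<theta> l b))"
    using DERIV_imp_deriv[OF dR[OF m l b]] unfolding Fm_def by simp
  thus ?thesis using q Fm_pos[OF b] by simp
qed

lemma harnack:
  assumes a: "0 < a1" "a1 \<le> a2" "a2 \<le> K * a1" and K: "K \<ge> 1"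
  shows "\<bar>deriv (\<lambda>b. Rfun m \<theta> b l) a1\<bar> \<le> 2 * K^23 * \<bar>deriv (\<lambda>b. Rfun m \<theta> b l) a2\<bar>"
    "\<bar>deriv (\<lambda>b. Rfun m \<theta> b l) a2\<bar> \<le> 2 * K^23 * \<bar>deriv (\<lambda>b. Rfun m \<theta> b l) a1\<bar>"
proof -
  have a2p: "a2 > 0" using a by simp
  define Q1 where "Q1 = Qb m l a1"
  define Q2 where "Q2 = Qb m l a2"
  define k1 where "k1 = kappa m a1 l"
  define k2 where "k2 = kappa m a2 l"
  define T1 where "T1 = Tt m \<theta> l a1"
  define T2 where "T2 = Tt m \<theta> l a2"
  have Q1g: "Q1 > 1" unfolding Q1_def using Qb_gt1[OF m l a(1)] .
  have Q2g: "Q2 > 1" unfolding Q2_def using Qb_gt1[OF m l a2p] .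
  have Q12: "Q1 \<le> Q2" "Q2 \<le> K * Q1" unfolding Q1_def Q2_def using Q_facts[OF m l a K] by auto
  have k1q: "k1 = 1 / Q1" unfolding k1_def Q1_def using kappa_eq[OF m l] .
  have k2q: "k2 = 1 / Q2" unfolding k2_def Q2_def using kappa_eq[OF m l] .
  have K2: "K^2 \<ge> 1" using K by (simp add: one_le_power)
  have KK2: "K \<le> K^2" using K by (simp add: power2_eq_square)
  have T1p: "T1 \<ge> 0" unfolding T1_def using Tt_props(1)[OF m l a(1)] .
  have T2p: "T2 \<ge> 0" unfolding T2_def using Tt_props(1)[OF m l a2p] .
  have kk: "0 < k2" "k2 \<le> k1" "k1 < 1" unfolding k1q k2q using Q1g Q2g Q12 by (auto simp: frac_le)
  have r1: "k1 \<le> K^2 * k2"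
  proof -
    have "Q2 \<le> K^2 * Q1" using Q12(2) mult_right_mono[OF KK2, of Q1] Q1g by linarith
    then have "1 / Q1 \<le> K^2 / Q2" using Q1g Q2g by (simp add: field_simps)
    thus ?thesis unfolding k1q k2q by simp
  qed
  have r2: "1 - k2 \<le> K^2 * (1 - k1)"
  proof -
    have om: "1 - 1 / Qb m l b = (4 * b^2 * l / m^2) / (Qb m l b * (Qb m l b + 1))" if "b > 0" for b
    proof -
      have Q: "Qb m l b > 1" using Qb_gt1[OF m l that] .
      have "1 - 1 / Qb m l b = (Qb m l b ^ 2 - 1) / (Qb m l b * (Qb m l b + 1))"
        using om_gen[OF Q] .
      thus ?thesis using Qsq[OF m l, of b] by simp
    qed
    have sq2: "a2^2 \<le> K^2 * a1^2" using power_mono[OF a(3), of 2] a2p by (simp add: power_mult_distrib)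
    have s: "4 * l / m^2 > 0" using l m by simp
    have num: "4 * a2^2 * l / m^2 \<le> K^2 * (4 * a1^2 * l / m^2)"
      using mult_right_mono[OF sq2, of "4 * l / m^2"] s by (simp add: ac_simps)
    have den: "Q1 * (Q1 + 1) \<le> Q2 * (Q2 + 1)" using Q12 Q1g by (intro mult_mono) auto
    have "(4 * a2^2 * l / m^2) / (Q2 * (Q2 + 1)) \<le> (K^2 * (4 * a1^2 * l / m^2)) / (Q1 * (Q1 + 1))"
    proof (rule frac_le[OF _ num])
      show "0 \<le> K^2 * (4 * a1^2 * l / m^2)" using K2 l by simp
      show "0 < Q1 * (Q1 + 1)" using Q1g by simp
    qed (rule den)
    thus ?thesis unfolding k1q k2q om[OF a(1), folded Q1_def] om[OF a2p, folded Q2_def] by simp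
  qed
  note l1 = L1[OF kk T2p K2 r1 r2]
  note l3 = L3[OF m l a K, of \<theta>, folded T1_def T2_def k1_def]
  have c1: "Qf k1 T1 \<le> K^2 * Qf k1 T2" and c2: "Qf k1 T2 \<le> (K^2)^8 * Qf k1 T1"
  proof -
    have "(Qf k1 T1 \<le> K^2 * Qf k1 T2) \<and> (Qf k1 T2 \<le> (K^2)^8 * Qf k1 T1)"
    proof (cases "T1 > 0")
      case True
      from L2[OF kk(1)[THEN less_le_trans, OF kk(2)] kk(3) True l3(1) K2 l3(2)] show ?thesis by simp
    next
      case False
      then have "T1 = 0" using T1p by simp
      then have "Phi k1 T2 \<le> 0" using l3(2) by (simp add: Phi_def)
      then have "T2 = 0" using Phi_pos[OF kk(3), of T2] T2p by (cases "T2 = 0") auto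
      have qp: "Qf k1 T1 > 0" using Qf_pos[of k1 T1] kk T1p by simp
      have "(K^2)^8 \<ge> 1" using one_le_power[OF K2, of 8] by simp
      then show ?thesis using \<open>T1 = 0\<close> \<open>T2 = 0\<close> qp K2
        using mult_right_mono[OF K2, of "Qf k1 T1"] mult_right_mono[of 1 "(K^2)^8" "Qf k1 T1"] by auto
    qed
    thus "Qf k1 T1 \<le> K^2 * Qf k1 T2" "Qf k1 T2 \<le> (K^2)^8 * Qf k1 T1" by auto
  qed
  have qpos: "Qf k1 T1 > 0" "Qf k2 T2 > 0" "Qf k1 T2 > 0" using Qf_pos kk T1p T2p by auto
  have q12: "Qf k1 T1 \<le> 2 * K^6 * Qf k2 T2"
  proof -
    have "Qf k1 T1 \<le> K^2 * Qf k1 T2" by (rule c1)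
    also have "\<dots> \<le> K^2 * (2 * (K^2)^2 * Qf k2 T2)" using l1(1) K2 by (intro mult_left_mono) auto
    also have "\<dots> = 2 * K^6 * Qf k2 T2" by (simp add: power_mult[symmetric] algebra_simps)
    finally show ?thesis .
  qed
  have q21: "Qf k2 T2 \<le> K^22 * Qf k1 T1"
  proof -
    have "Qf k2 T2 \<le> (K^2)^3 * Qf k1 T2" by (rule l1(2))
    also have "\<dots> \<le> (K^2)^3 * ((K^2)^8 * Qf k1 T1)" using c2 K by (intro mult_left_mono) auto
    also have "\<dots> = K^22 * Qf k1 T1" by (simp add: power_mult[symmetric] power_add[symmetric] algebra_simps)
    finally show ?thesis .
  qed
  have a3: "a1^3 \<le> a2^3" "a2^3 \<le> K^3 * a1^3"
    using power_mono[OF a(2), of 3] power_mono[OF a(3), of 3] a by (auto simp: power_mult_distrib)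
  have F12: "Fm a1 \<le> K^3 * Fm a2"
  proof -
    have K3: "K^3 > 0" using K by simp
    have "m * Q1 / (2 * a1^3) \<le> (m * Q2) / (2 * a2^3 / K^3)"
      by (rule frac_le) (use m Q12 Q1g a2p a3 K3 in \<open>auto simp: field_simps\<close>)
    thus ?thesis unfolding Fm_eq[OF a(1)] Fm_eq[OF a2p] Q1_def Q2_def using K3 by (simp add: field_simps)
  qed
  have F21: "Fm a2 \<le> K * Fm a1"
  proof -
    have "m * Q2 / (2 * a2^3) \<le> (m * (K * Q1)) / (2 * a1^3)"
      by (rule frac_le) (use m Q12 Q1g a a3 K in \<open>auto simp: field_simps\<close>)
    thus ?thesis unfolding Fm_eq[OF a(1)] Fm_eq[OF a2p] Q1_def Q2_def by (simp add: field_simps)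
  qed
  have Fp: "Fm a1 > 0" "Fm a2 > 0" using Fm_pos a a2p by auto
  have K9: "K^9 \<le> K^23" using K by (intro power_increasing) auto
  have d1: "\<bar>deriv (\<lambda>b. Rfun m \<theta> b l) a1\<bar> = Fm a1 * Qf k1 T1" unfolding k1_def T1_def using absR[OF a(1)] .
  have d2: "\<bar>deriv (\<lambda>b. Rfun m \<theta> b l) a2\<bar> = Fm a2 * Qf k2 T2" unfolding k2_def T2_def using absR[OF a2p] .
  have "Fm a1 * Qf k1 T1 \<le> (K^3 * Fm a2) * (2 * K^6 * Qf k2 T2)"
    using F12 q12 Fp qpos by (intro mult_mono) auto
  also have "\<dots> = 2 * K^9 * (Fm a2 * Qf k2 T2)" by (simp add: power_add[symmetric] algebra_simps)
  also have "\<dots> \<le> 2 * K^23 * (Fm a2 * Qf k2 T2)" using K9 Fp qpos by (intro mult_right_mono) auto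
  finally show "\<bar>deriv (\<lambda>b. Rfun m \<theta> b l) a1\<bar> \<le> 2 * K^23 * \<bar>deriv (\<lambda>b. Rfun m \<theta> b l) a2\<bar>"
    unfolding d1 d2 .
  have "Fm a2 * Qf k2 T2 \<le> (K * Fm a1) * (K^22 * Qf k1 T1)"
    using F21 q21 Fp qpos by (intro mult_mono) auto
  also have "\<dots> = K^23 * (Fm a1 * Qf k1 T1)" by (simp add: power_Suc[symmetric] algebra_simps del: power_Suc)
  also have "\<dots> \<le> 2 * K^23 * (Fm a1 * Qf k1 T1)" using Fp qpos K by simp
  finally show "\<bar>deriv (\<lambda>b. Rfun m \<theta> b l) a2\<bar> \<le> 2 * K^23 * \<bar>deriv (\<lambda>b. Rfun m \<theta> b l) a1\<bar>"
    unfolding d1 d2 .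
qed

end

theorem lemma2p17:
  fixes m :: real
  assumes "m > 0"
  shows "(\<forall>\<theta> l a1 a2. l > 0 \<longrightarrow> 0 < a1 \<longrightarrow> a1 < a2 \<longrightarrow> Rfun m \<theta> a2 l < Rfun m \<theta> a1 l)
       \<and> (\<forall>C0::real. C0 \<ge> 1 \<longrightarrow> (\<exists>C::real. C \<ge> 1 \<and>
           (\<forall>\<theta> a l. a > 0 \<longrightarrow> l > 0 \<longrightarrow>
              (SUP \<alpha>\<in>{a / C0 .. C0 * a}. \<bar>deriv (\<lambda>b. Rfun m \<theta> b l) \<alpha>\<bar>)
                \<le> C * (INF \<alpha>\<in>{a / C0 .. C0 * a}. \<bar>deriv (\<lambda>b. Rfun m \<theta> b l) \<alpha>\<bar>))))"
proof (intro conjI allI impI)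
  fix \<theta> l a1 a2 :: real
  assume l: "l > 0" and a1: "0 < a1" and a12: "a1 < a2"
  show "Rfun m \<theta> a2 l < Rfun m \<theta> a1 l"
  proof (rule DERIV_neg_imp_decreasing[OF a12])
    fix x assume x: "a1 \<le> x" "x \<le> a2"
    then have xp: "x > 0" using a1 by simp
    have k: "0 < kappa m x l" "kappa m x l < 1" using kappa_bounds[OF assms l xp] by auto
    have "Fm m l x > 0" using Fm_pos[OF assms l xp] .
    moreover have "Qf (kappa m x l) (Tt m \<theta> l x) > 0" using Qf_pos[OF k] Tt_props(1)[OF assms l xp] by simp
    ultimately have "Fm m l x * Qf (kappa m x l) (Tt m \<theta> l x) > 0" by simp
    moreover have "Fm m l x = Bf m x * Qb m l x / x" by (rule Fm_def[OF assms l])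
    ultimately have "-(Bf m x * Qb m l x / x) * Qf (kappa m x l) (Tt m \<theta> l x) < 0" by simp
    with dR[OF assms l xp] show "\<exists>y. DERIV (\<lambda>b. Rfun m \<theta> b l) x :> y \<and> y < 0" by blast
  qed
next
  fix C0 :: real assume C0: "C0 \<ge> 1"
  define K where "K = C0^2"
  have K: "K \<ge> 1" unfolding K_def using C0 by (simp add: one_le_power)
  define C where "C = 2 * K^23"
  have C: "C \<ge> 1" unfolding C_def using one_le_power[OF K, of 23] by simp
  show "\<exists>C::real. C \<ge> 1 \<and>
           (\<forall>\<theta> a l. a > 0 \<longrightarrow> l > 0 \<longrightarrow>
              (SUP \<alpha>\<in>{a / C0 .. C0 * a}. \<bar>deriv (\<lambda>b. Rfun m \<theta> b l) \<alpha>\<bar>)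
                \<le> C * (INF \<alpha>\<in>{a / C0 .. C0 * a}. \<bar>deriv (\<lambda>b. Rfun m \<theta> b l) \<alpha>\<bar>))"
  proof (intro exI[of _ C] conjI allI impI C)
    fix \<theta> a l :: real assume a: "a > 0" and l: "l > 0"
    define S where "S = {a / C0 .. C0 * a}"
    define f where "f = (\<lambda>\<alpha>. \<bar>deriv (\<lambda>b. Rfun m \<theta> b l) \<alpha>\<bar>)"
    have C0p: "C0 > 0" using C0 by simp
    have Sne: "S \<noteq> {}" unfolding S_def using a C0 
      by (simp add: divide_le_eq) (metis C0 mult_le_cancel_right1 mult_mono dual_order.trans less_le_trans zero_less_one order_refl a less_imp_le mult_nonneg_nonneg)
    have pair: "f x \<le> C * f y" if x: "x \<in> S" and y: "y \<in> S" for x y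
    proof -
      have xp: "x > 0" and yp: "y > 0" using x y a C0p unfolding S_def by (auto intro: less_le_trans[rotated])
      have bnd: "v \<le> K * u" if "u \<in> S" "v \<in> S" for u v
      proof -
        have "a \<le> C0 * u" using that(1) C0p unfolding S_def by (simp add: divide_le_eq mult.commute)
        then have "C0 * a \<le> C0 * (C0 * u)" using C0p by simp
        moreover have "v \<le> C0 * a" using that(2) unfolding S_def by simp
        ultimately show ?thesis unfolding K_def by (simp add: power2_eq_square mult.assoc)
      qed
      show ?thesis
      proof (cases "x \<le> y")
        case True
        show ?thesis using harnack(1)[OF assms l xp True bnd[OF x y] K, of \<theta>] unfolding f_def C_def .
      next
        case False
        then have "y \<le> x" by simp
        show ?thesis using harnack(2)[OF assms l yp \<open>y \<le> x\<close> bnd[OF y x] K, of \<theta>] unfolding f_def C_def .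
      qed
    qed
    have "f x \<le> C * (INF y\<in>S. f y)" if x: "x \<in> S" for x
    proof -
      have Cp: "C > 0" using C by simp
      have "f x / C \<le> (INF y\<in>S. f y)"
        by (rule cINF_greatest[OF Sne]) (use pair[OF x] Cp in \<open>simp add: divide_le_eq mult.commute\<close>)
      thus ?thesis using Cp by (simp add: divide_le_eq mult.commute)
    qed
    then have "(SUP x\<in>S. f x) \<le> C * (INF y\<in>S. f y)" by (rule cSUP_least[OF Sne])
    thus "(SUP \<alpha>\<in>{a / C0 .. C0 * a}. \<bar>deriv (\<lambda>b. Rfun m \<theta> b l) \<alpha>\<bar>)
                \<le> C * (INF \<alpha>\<in>{a / C0 .. C0 * a}. \<bar>deriv (\<lambda>b. Rfun m \<theta> b l) \<alpha>\<bar>)"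
      unfolding S_def f_def .
  qed
qed

end
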